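(* The critical push-pull network (i.e. the push-pull network with $\lambda_1=\mu_1$ and $\lambda_2=\mu_2$) is non-stabilizable: there is no deterministic stationary non-idling policy under which the associated Markov jump process has a positive recurrent class that is entered with probability $1$.
   Context: The push-pull network has two servers and two job streams $i=1,2$, with strictly positive rates $\lambda_1,\lambda_2,\mu_1,\mu_2$. The state is $(x_1,x_2)\in\mathcal{S}=\mathbb{Z}_+^2$, where $x_i$ is the number of jobs in queue $i$. Server 1 can either "push" on stream 1 (an operation completing at exponential rate $\lambda_1$ and adding one job to queue 1) or "pull" from queue 2 (completing at exponential rate $\mu_2$ and removing one job from queue 2; allowed only if $x_2>0$). Server 2 can either "push" on stream 2 (rate $\lambda_2$, adds a job to queue 2) or "pull" from queue 1 (rate $\mu_1$, removes a job from queue 1; allowed only if $x_1>0$). Pushing is always possible. Operation durations are exponential, preemption is allowed, and durations are not known at commencement. A (deterministic, stationary) non-idling policy is a function $\mathcal{P}:\mathcal{S}\to\{\text{push},\text{pull}\}^2$ giving the actions of (server 1, server 2), with $\mathcal{P}((x,0))\in\{\text{push}\}\times\{\text{push},\text{pull}\}$ and $\mathcal{P}((0,x))\in\{\text{push},\text{pull}\}\times\{\text{push}\}$ for all integers $x\ge 0$. Given $\mathcal{P}$, in state $(x_1,x_2)$ the two active operations run simultaneously at their respective exponential rates and the state jumps according to whichever completes first; this defines a Markov jump process on $\mathcal{S}$. The network controlled by $\mathcal{P}$ is stable if this Markov jump process has a positive recurrent class which the process enters with probability 1; the network is stabilizable if some non-idling policy makes it stable, and non-stabilizable otherwise. *)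

theory Defs
  imports "HOL-Analysis.Analysis"
begin

text \<open>A Markov jump process on a countable state space is described by its
transition rates Q s t (rate of jumping from s to t, for t different from s).
We describe it through its embedded jump chain and its holding rates.\<close>

definition exit_rate :: "('s \<Rightarrow> 's \<Rightarrow> real) \<Rightarrow> 's \<Rightarrow> real" where
  "exit_rate Q s = (\<Sum>\<^sub>\<infinity>t\<in>UNIV - {s}. Q s t)"

definition jump_prob :: "('s \<Rightarrow> 's \<Rightarrow> real) \<Rightarrow> 's \<Rightarrow> 's \<Rightarrow> real" where
  "jump_prob Q s t = (if t = s then 0 else Q s t / exit_rate Q s)"

text \<open>taboo Q x n z = probability that the jump chain started in x is in z at
step n and has not visited x at steps 1..n.\<close>
fun taboo :: "('s \<Rightarrow> 's \<Rightarrow> real) \<Rightarrow> 's \<Rightarrow> nat \<Rightarrow> 's \<Rightarrow> real" where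
  "taboo Q x 0 z = (if z = x then 1 else 0)"
| "taboo Q x (Suc n) z =
     (if z = x then 0 else (\<Sum>\<^sub>\<infinity>w. taboo Q x n w * jump_prob Q w z))"

text \<open>Probability of first return to x at jump number n+1.\<close>
definition first_return :: "('s \<Rightarrow> 's \<Rightarrow> real) \<Rightarrow> 's \<Rightarrow> nat \<Rightarrow> real" where
  "first_return Q x n = (\<Sum>\<^sub>\<infinity>w. taboo Q x n w * jump_prob Q w x)"

definition recurrent_state :: "('s \<Rightarrow> 's \<Rightarrow> real) \<Rightarrow> 's \<Rightarrow> bool" where
  "recurrent_state Q x \<longleftrightarrow> first_return Q x sums 1"

text \<open>Expected (continuous) return time to x: the sum of the expected holding
times 1 / exit_rate of the states visited at jumps 0, ..., T-1 where T is the
return jump; x is positive recurrent iff it is recurrent and this expectation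
is finite.\<close>
definition positive_recurrent_state :: "('s \<Rightarrow> 's \<Rightarrow> real) \<Rightarrow> 's \<Rightarrow> bool" where
  "positive_recurrent_state Q x \<longleftrightarrow>
     recurrent_state Q x \<and>
     summable (\<lambda>n. (\<Sum>\<^sub>\<infinity>z. taboo Q x n z / exit_rate Q z))"

definition accessible :: "('s \<Rightarrow> 's \<Rightarrow> real) \<Rightarrow> 's \<Rightarrow> 's \<Rightarrow> bool" where
  "accessible Q = (\<lambda>a b. a \<noteq> b \<and> Q a b > 0)\<^sup>*\<^sup>*"

definition positive_recurrent_class :: "('s \<Rightarrow> 's \<Rightarrow> real) \<Rightarrow> 's set \<Rightarrow> bool" where
  "positive_recurrent_class Q C \<longleftrightarrow>
     (\<exists>x. C = {y. accessible Q x y \<and> accessible Q y x}) \<and>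
     (\<forall>y\<in>C. positive_recurrent_state Q y)"

text \<open>first_hit Q C n y = probability that the process started in y enters C
for the first time at jump n.\<close>
fun first_hit :: "('s \<Rightarrow> 's \<Rightarrow> real) \<Rightarrow> 's set \<Rightarrow> nat \<Rightarrow> 's \<Rightarrow> real" where
  "first_hit Q C 0 y = (if y \<in> C then 1 else 0)"
| "first_hit Q C (Suc n) y =
     (if y \<in> C then 0 else (\<Sum>\<^sub>\<infinity>w. jump_prob Q y w * first_hit Q C n w))"

definition entered_surely :: "('s \<Rightarrow> 's \<Rightarrow> real) \<Rightarrow> 's set \<Rightarrow> bool" where
  "entered_surely Q C \<longleftrightarrow> (\<forall>y. (\<lambda>n. first_hit Q C n y) sums 1)"

definition stable_process :: "('s \<Rightarrow> 's \<Rightarrow> real) \<Rightarrow> bool" where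
  "stable_process Q \<longleftrightarrow> (\<exists>C. positive_recurrent_class Q C \<and> entered_surely Q C)"

datatype action = Push | Pull

type_synonym state = "nat \<times> nat"
type_synonym policy = "state \<Rightarrow> action \<times> action"

definition non_idling :: "policy \<Rightarrow> bool" where
  "non_idling P \<longleftrightarrow> (\<forall>x. fst (P (x, 0)) = Push \<and> snd (P (0, x)) = Push)"

text \<open>Transition rates of the network controlled by P (rates l1 = lambda_1,
l2 = lambda_2, m1 = mu_1, m2 = mu_2).  Server 1: push adds to queue 1 (rate l1),
pull removes from queue 2 (rate m2); server 2: push adds to queue 2 (rate l2),
pull removes from queue 1 (rate m1).\<close>
definition pp_rate :: "real \<Rightarrow> real \<Rightarrow> real \<Rightarrow> real \<Rightarrow> policy \<Rightarrow> state \<Rightarrow> state \<Rightarrow> real" where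
  "pp_rate l1 l2 m1 m2 P s t =
     (case s of (a, b) \<Rightarrow>
       (if fst (P (a, b)) = Push then (if t = (a + 1, b) then l1 else 0)
        else (if t = (a, b - 1) then m2 else 0))
     + (if snd (P (a, b)) = Push then (if t = (a, b + 1) then l2 else 0)
        else (if t = (a - 1, b) then m1 else 0)))"

definition stabilizable :: "real \<Rightarrow> real \<Rightarrow> real \<Rightarrow> real \<Rightarrow> bool" where
  "stabilizable l1 l2 m1 m2 \<longleftrightarrow>
     (\<exists>P. non_idling P \<and> stable_process (pp_rate l1 l2 m1 m2 P))"

end

theory Submission
  imports Defs
begin

lemma infsum_fin:
  fixes f :: "'a \<Rightarrow> real"
  assumes "finite S" "\<And>x. x \<in> A \<Longrightarrow> x \<notin> S \<Longrightarrow> f x = 0"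
  shows "infsum f A = sum f (A \<inter> S)"
proof -
  have "infsum f A = infsum f (A \<inter> S)"
    by (rule infsum_cong_neutral) (auto simp: assms)
  then show ?thesis using assms(1) by simp
qed

lemma mart_r: assumes "(a::real) > 0" "b > 0" shows "a/(a+b)*(c+1/a) + b/(a+b)*(c-1/b) = c"
proof -
  have s: "a + b > 0" using assms by simp
  have e1: "a*(c+1/a) = a*c+1" using assms by (simp add: field_simps)
  have e2: "b*(c-1/b) = b*c-1" using assms by (simp add: field_simps)
  have 1: "a/(a+b)*(c+1/a) = (a*c+1)/(a+b)" using e1 by (metis times_divide_eq_left mult.commute)
  have 2: "b/(a+b)*(c-1/b) = (b*c-1)/(a+b)" using e2 by (metis times_divide_eq_left mult.commute)
  have "(a*c+1)/(a+b) + (b*c-1)/(a+b) = ((a+b)*c)/(a+b)" by (simp add: add_divide_distrib[symmetric] algebra_simps)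
  also have "\<dots> = c" using s by simp
  finally show ?thesis unfolding 1 2 .
qed
lemma sq_r: assumes "(a::real) > 0" "b > 0" shows "a/(a+b)*(c+1/a)^2 + b/(a+b)*(c-1/b)^2 = c^2 + 1/(a*b)"
proof -
  have s: "a + b > 0" using assms by simp
  have e1: "a*(c+1/a)^2 = (a*c+1)^2/a" using assms by (simp add: field_simps power2_eq_square)
  have e2: "b*(c-1/b)^2 = (b*c-1)^2/b" using assms by (simp add: field_simps power2_eq_square)
  have 1: "a/(a+b)*(c+1/a)^2 = (a*c+1)^2/(a*(a+b))" using e1 by (metis times_divide_eq_left mult.commute divide_divide_eq_left)
  have 2: "b/(a+b)*(c-1/b)^2 = (b*c-1)^2/(b*(a+b))" using e2 by (metis times_divide_eq_left mult.commute divide_divide_eq_left)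
  have 3: "(a*c+1)^2/(a*(a+b)) = (b*(a*c+1)^2)/(a*b*(a+b))" using assms by (simp add: ac_simps)
  have 4: "(b*c-1)^2/(b*(a+b)) = (a*(b*c-1)^2)/(a*b*(a+b))" using assms by (simp add: ac_simps)
  have "(a*c+1)^2/(a*(a+b)) + (b*c-1)^2/(b*(a+b)) = (b*(a*c+1)^2 + a*(b*c-1)^2)/(a*b*(a+b))"
    unfolding 3 4 by (simp add: add_divide_distrib)
  also have "b*(a*c+1)^2 + a*(b*c-1)^2 = (a*b*(a+b)) * (c^2 + 1/(a*b))"
    using assms by (simp add: field_simps power2_eq_square)
  also have "(a*b*(a+b)) * (c^2 + 1/(a*b)) / (a*b*(a+b)) = c^2 + 1/(a*b)"
    using assms s by simp
  finally show ?thesis unfolding 1 2 .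
qed

lemma CS:
  fixes t h :: "'a \<Rightarrow> real"
  assumes fin: "finite A" and nn: "\<And>a. t a \<ge> 0"
  shows "(\<Sum>a\<in>A. t a * \<bar>h a\<bar>)^2 \<le> (\<Sum>a\<in>A. t a) * (\<Sum>a\<in>A. t a * (h a)^2)"
proof (cases "(\<Sum>a\<in>A. t a) = 0")
  case True
  then have "\<forall>a\<in>A. t a = 0" using sum_nonneg_eq_0_iff[OF fin] nn by blast
  then show ?thesis by simp
next
  case False
  define s where "s = (\<Sum>a\<in>A. t a)"
  define g where "g = (\<Sum>a\<in>A. t a * \<bar>h a\<bar>)"
  define f where "f = (\<Sum>a\<in>A. t a * (h a)^2)"
  define c where "c = g / s"
  have sp: "s > 0" using False nn unfolding s_def by (metis order_le_less sum_nonneg)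
  have "0 \<le> (\<Sum>a\<in>A. t a * (\<bar>h a\<bar> - c)^2)" by (intro sum_nonneg mult_nonneg_nonneg nn) auto
  also have "\<dots> = (\<Sum>a\<in>A. t a * (h a)^2 - 2 * c * (t a * \<bar>h a\<bar>) + c^2 * t a)"
    by (rule sum.cong) (auto simp: power2_eq_square algebra_simps)
  also have "\<dots> = f - 2 * c * g + c^2 * s"
    by (simp add: sum.distrib sum_subtractf sum_distrib_left f_def g_def s_def)
  also have "\<dots> = f - g^2 / s" using sp by (simp add: c_def field_simps power2_eq_square)
  finally have "g^2 / s \<le> f" by simp
  then have "g^2 \<le> s * f" using sp by (simp add: field_simps)
  then show ?thesis by (simp add: s_def g_def f_def)
qed


locale ppn =
  fixes l1 l2 :: real and P :: policy
  assumes l1: "l1 > 0" and l2: "l2 > 0" and ni: "non_idling P"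
begin

abbreviation "Q \<equiv> pp_rate l1 l2 l1 l2 P"

definition "t1 s = (if fst (P s) = Push then (fst s + 1, snd s) else (fst s, snd s - 1))"
definition "t2 s = (if snd (P s) = Push then (fst s, snd s + 1) else (fst s - 1, snd s))"
definition "r1 s = (if fst (P s) = Push then l1 else l2)"
definition "r2 s = (if snd (P s) = Push then l2 else l1)"
definition "p1 s = r1 s / (r1 s + r2 s)"
definition "p2 s = r2 s / (r1 s + r2 s)"

lemma notpush[simp]: "(a \<noteq> Push) = (a = Pull)" by (cases a) auto

lemma pull1: "fst (P s) = Pull \<Longrightarrow> snd s > 0"
  using ni unfolding non_idling_def
  by (metis action.distinct(1) gr0I prod.collapse)

lemma pull2: "snd (P s) = Pull \<Longrightarrow> fst s > 0"
  using ni unfolding non_idling_def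
  by (metis action.distinct(1) gr0I prod.collapse)

lemma r1_pos: "r1 s > 0" and r2_pos: "r2 s > 0"
  using l1 l2 by (auto simp: r1_def r2_def)

lemma Q_eq: "Q s t = (if t = t1 s then r1 s else 0) + (if t = t2 s then r2 s else 0)"
  by (cases s) (auto simp: pp_rate_def t1_def t2_def r1_def r2_def)

lemma t_neq: "t1 s \<noteq> s" "t2 s \<noteq> s" "t1 s \<noteq> t2 s"
proof -
  show "t1 s \<noteq> s" using pull1[of s] by (cases s) (auto simp: t1_def)
  show "t2 s \<noteq> s" using pull2[of s] by (cases s) (auto simp: t2_def)
  show "t1 s \<noteq> t2 s" using pull1[of s] pull2[of s]
    by (cases s) (auto simp: t1_def t2_def split: if_splits)
qed

lemma exit_eq: "exit_rate Q s = r1 s + r2 s"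
proof -
  have "exit_rate Q s = sum (Q s) ((UNIV - {s}) \<inter> {t1 s, t2 s})"
    unfolding exit_rate_def by (rule infsum_fin) (auto simp: Q_eq)
  also have "(UNIV - {s}) \<inter> {t1 s, t2 s} = {t1 s, t2 s}" using t_neq by auto
  also have "sum (Q s) {t1 s, t2 s} = r1 s + r2 s" using t_neq(3)[of s] t_neq(3)[of s, THEN not_sym] by (simp add: Q_eq)
  finally show ?thesis .
qed

lemma jp_eq: "jump_prob Q s t = (if t = t1 s then p1 s else 0) + (if t = t2 s then p2 s else 0)"
proof -
  have a: "t1 s \<noteq> s" "t2 s \<noteq> s" "t1 s \<noteq> t2 s" "t2 s \<noteq> t1 s" using t_neq[of s] by auto
  show ?thesis unfolding jump_prob_def exit_eq p1_def p2_def Q_eq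
    using a by (cases "t = t1 s"; cases "t = t2 s"; cases "t = s") auto
qed

definition B :: "state \<Rightarrow> nat \<Rightarrow> state set" where "B x n = {0..fst x + n} \<times> {0..snd x + n}"

lemma B_fin: "finite (B x n)" by (simp add: B_def)

lemma x_B: "x \<in> B x n" by (cases x) (auto simp: B_def)

lemma t_B: "w \<in> B x n \<Longrightarrow> t1 w \<in> B x (Suc n) \<and> t2 w \<in> B x (Suc n)"
  by (cases w) (auto simp: B_def t1_def t2_def)

lemma taboo_supp: "z \<notin> B x n \<Longrightarrow> taboo Q x n z = 0"
proof (induction n arbitrary: z)
  case 0 then show ?case using x_B[of x 0] by auto
next
  case (Suc n)
  have "(\<Sum>\<^sub>\<infinity>w. taboo Q x n w * jump_prob Q w z) = 0"
  proof (rule infsum_0)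
    fix w
    show "taboo Q x n w * jump_prob Q w z = 0"
    proof (cases "w \<in> B x n")
      case True
      then have "z \<noteq> t1 w" "z \<noteq> t2 w" using t_B[OF True] Suc.prems by auto
      then show ?thesis by (simp add: jp_eq)
    next
      case False then show ?thesis using Suc.IH by simp
    qed
  qed
  then show ?case by simp
qed

lemma taboo_Suc: "taboo Q x (Suc n) z =
   (if z = x then 0 else (\<Sum>w\<in>B x n. taboo Q x n w * jump_prob Q w z))"
proof -
  have "(\<Sum>\<^sub>\<infinity>w. taboo Q x n w * jump_prob Q w z) = (\<Sum>w\<in>UNIV \<inter> B x n. taboo Q x n w * jump_prob Q w z)"
    by (rule infsum_fin) (auto simp: B_fin taboo_supp)
  then show ?thesis by simp
qed

lemma p_nonneg: "p1 s \<ge> 0" "p2 s \<ge> 0"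
  using r1_pos[of s] r2_pos[of s] by (auto simp: p1_def p2_def)

lemma jp_nonneg: "jump_prob Q s t \<ge> 0"
  using p_nonneg[of s] by (simp add: jp_eq)

lemma taboo_nonneg: "taboo Q x n z \<ge> 0"
proof (induction n arbitrary: z)
  case 0 then show ?case by simp
next
  case (Suc n) then show ?case unfolding taboo_Suc
    by (auto intro!: sum_nonneg mult_nonneg_nonneg jp_nonneg)
qed

lemma step:
  assumes "g x = 0"
  shows "(\<Sum>z\<in>B x (Suc n). taboo Q x (Suc n) z * g z)
       = (\<Sum>w\<in>B x n. taboo Q x n w * (p1 w * g (t1 w) + p2 w * g (t2 w)))"
proof -
  have "(\<Sum>z\<in>B x (Suc n). taboo Q x (Suc n) z * g z)
      = (\<Sum>z\<in>B x (Suc n). \<Sum>w\<in>B x n. taboo Q x n w * (jump_prob Q w z * g z))"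
    by (rule sum.cong) (auto simp del: taboo.simps simp: taboo_Suc assms sum_distrib_right mult.assoc)
  also have "\<dots> = (\<Sum>w\<in>B x n. taboo Q x n w * (\<Sum>z\<in>B x (Suc n). jump_prob Q w z * g z))"
    by (subst sum.swap) (simp add: sum_distrib_left)
  also have "\<dots> = (\<Sum>w\<in>B x n. taboo Q x n w * (p1 w * g (t1 w) + p2 w * g (t2 w)))"
  proof (rule sum.cong)
    fix w assume w: "w \<in> B x n"
    have "(\<Sum>z\<in>B x (Suc n). jump_prob Q w z * g z)
        = (\<Sum>z\<in>B x (Suc n). (if z = t1 w then p1 w * g z else 0) + (if z = t2 w then p2 w * g z else 0))"
      by (rule sum.cong) (auto simp: jp_eq distrib_right)
    also have "\<dots> = p1 w * g (t1 w) + p2 w * g (t2 w)"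
      using t_B[OF w] t_neq(3)[of w] by (simp add: sum.distrib B_fin sum.delta')
    finally show "taboo Q x n w * (\<Sum>z\<in>B x (Suc n). jump_prob Q w z * g z) =
         taboo Q x n w * (p1 w * g (t1 w) + p2 w * g (t2 w))" by simp
  qed simp
  finally show ?thesis .
qed

definition "V z = real (fst z) / l1 - real (snd z) / l2"

lemma V_t1: "V (t1 w) = V w + 1 / r1 w"
  using pull1[of w] l1 l2 by (cases w) (auto simp: V_def t1_def r1_def of_nat_diff diff_divide_distrib add_divide_distrib)

lemma V_t2: "V (t2 w) = V w - 1 / r2 w"
  using pull2[of w] l1 l2 by (cases w) (auto simp: V_def t2_def r2_def of_nat_diff diff_divide_distrib add_divide_distrib)

lemma mart: "p1 w * (c + 1/r1 w) + p2 w * (c - 1/r2 w) = c"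
  unfolding p1_def p2_def by (rule mart_r[OF r1_pos r2_pos])

lemma sq: "p1 w * (c + 1/r1 w)^2 + p2 w * (c - 1/r2 w)^2 = c^2 + 1/(r1 w * r2 w)"
  unfolding p1_def p2_def by (rule sq_r[OF r1_pos r2_pos])

definition "S x n = (\<Sum>z\<in>B x n. taboo Q x n z)"
definition "F x n = (\<Sum>z\<in>B x n. taboo Q x n z * (V z - V x)^2)"
definition "G x n = (\<Sum>z\<in>B x n. taboo Q x n z * \<bar>V z - V x\<bar>)"

definition "m = min l1 l2"

lemma m_pos: "m > 0" using l1 l2 by (simp add: m_def)
lemma r_ge: "r1 w \<ge> m" "r2 w \<ge> m" by (auto simp: m_def r1_def r2_def)

lemma S_nonneg: "S x n \<ge> 0" by (simp add: S_def sum_nonneg taboo_nonneg)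
lemma F_nonneg: "F x n \<ge> 0" by (simp add: F_def sum_nonneg taboo_nonneg)

lemma F_Suc: "F x (Suc n) = F x n + (\<Sum>w\<in>B x n. taboo Q x n w / (r1 w * r2 w))"
proof -
  have "F x (Suc n) = (\<Sum>w\<in>B x n. taboo Q x n w * (p1 w * (V (t1 w) - V x)^2 + p2 w * (V (t2 w) - V x)^2))"
    unfolding F_def by (rule step[where g = "\<lambda>z. (V z - V x)^2"]) simp
  also have "\<dots> = (\<Sum>w\<in>B x n. taboo Q x n w * (V w - V x)^2 + taboo Q x n w / (r1 w * r2 w))"
  proof (rule sum.cong)
    fix w
    have "p1 w * (V (t1 w) - V x)^2 + p2 w * (V (t2 w) - V x)^2
       = p1 w * ((V w - V x) + 1/r1 w)^2 + p2 w * ((V w - V x) - 1/r2 w)^2"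
      by (simp add: V_t1 V_t2 algebra_simps)
    also have "\<dots> = (V w - V x)^2 + 1/(r1 w * r2 w)" by (rule sq)
    finally show "taboo Q x n w * (p1 w * (V (t1 w) - V x)^2 + p2 w * (V (t2 w) - V x)^2)
       = taboo Q x n w * (V w - V x)^2 + taboo Q x n w / (r1 w * r2 w)"
      by (simp add: algebra_simps)
  qed simp
  finally show ?thesis by (simp add: sum.distrib F_def)
qed

lemma F_0: "F x 0 = 0"
  unfolding F_def by (rule sum.neutral) auto

lemma F_bound: "F x n \<le> (\<Sum>k<n. S x k) / (m * m)"
proof (induction n)
  case 0 then show ?case by (simp add: F_0)
next
  case (Suc n)
  have "(\<Sum>w\<in>B x n. taboo Q x n w / (r1 w * r2 w)) \<le> (\<Sum>w\<in>B x n. taboo Q x n w / (m * m))"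
  proof (rule sum_mono)
    fix w
    have "m * m \<le> r1 w * r2 w" using r_ge[of w] m_pos by (intro mult_mono) auto
    then show "taboo Q x n w / (r1 w * r2 w) \<le> taboo Q x n w / (m * m)"
      using m_pos taboo_nonneg[of x n w] mult_pos_pos[OF r1_pos r2_pos, of w w] by (intro divide_left_mono) auto
  qed
  also have "\<dots> = S x n / (m * m)" by (simp add: S_def sum_divide_distrib)
  finally show ?case using Suc by (simp add: F_Suc add_divide_distrib)
qed

lemma G_mono: "G x n \<le> G x (Suc n)"
proof -
  have "G x (Suc n) = (\<Sum>w\<in>B x n. taboo Q x n w * (p1 w * \<bar>V (t1 w) - V x\<bar> + p2 w * \<bar>V (t2 w) - V x\<bar>))"
    unfolding G_def by (rule step[where g = "\<lambda>z. \<bar>V z - V x\<bar>"]) simp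
  moreover have "G x n \<le> \<dots>" unfolding G_def
  proof (rule sum_mono)
    fix w
    have "\<bar>V w - V x\<bar> = \<bar>p1 w * ((V w - V x) + 1/r1 w) + p2 w * ((V w - V x) - 1/r2 w)\<bar>"
      by (simp add: mart)
    also have "\<dots> \<le> \<bar>p1 w * ((V w - V x) + 1/r1 w)\<bar> + \<bar>p2 w * ((V w - V x) - 1/r2 w)\<bar>"
      by (rule abs_triangle_ineq)
    also have "\<dots> = p1 w * \<bar>V (t1 w) - V x\<bar> + p2 w * \<bar>V (t2 w) - V x\<bar>"
    proof -
      have a: "V (t1 w) - V x = (V w - V x) + 1/r1 w" "V (t2 w) - V x = (V w - V x) - 1/r2 w"
        by (simp_all add: V_t1 V_t2)
      show ?thesis unfolding a abs_mult using p_nonneg[of w] by simp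
    qed
    finally show "taboo Q x n w * \<bar>V w - V x\<bar> \<le> taboo Q x n w * (p1 w * \<bar>V (t1 w) - V x\<bar> + p2 w * \<bar>V (t2 w) - V x\<bar>)"
      using taboo_nonneg[of x n w] by (rule mult_left_mono)
  qed
  ultimately show ?thesis by simp
qed

lemma G_1: "G x 1 > 0"
proof -
  have "G x (Suc 0) = (\<Sum>w\<in>B x 0. taboo Q x 0 w * (p1 w * \<bar>V (t1 w) - V x\<bar> + p2 w * \<bar>V (t2 w) - V x\<bar>))"
    unfolding G_def by (rule step[where g = "\<lambda>z. \<bar>V z - V x\<bar>"]) simp
  also have "\<dots> = p1 x * \<bar>V (t1 x) - V x\<bar> + p2 x * \<bar>V (t2 x) - V x\<bar>"
  proof -
    have "(\<Sum>w\<in>B x 0. taboo Q x 0 w * (p1 w * \<bar>V (t1 w) - V x\<bar> + p2 w * \<bar>V (t2 w) - V x\<bar>))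
       = (\<Sum>w\<in>B x 0. if w = x then p1 w * \<bar>V (t1 w) - V x\<bar> + p2 w * \<bar>V (t2 w) - V x\<bar> else 0)"
      by (rule sum.cong) auto
    then show ?thesis using x_B[of x 0] by (simp add: B_fin sum.delta')
  qed
  also have "\<dots> = p1 x / r1 x + p2 x / r2 x"
    using r1_pos[of x] r2_pos[of x] by (simp add: V_t1 V_t2)
  also have "\<dots> > 0" using r1_pos[of x] r2_pos[of x] by (simp add: p1_def p2_def)
  finally show ?thesis by simp
qed

lemma G_ge: "n \<ge> 1 \<Longrightarrow> G x n \<ge> G x 1"
proof (induction n rule: dec_induct)
  case base then show ?case by simp
next
  case (step n) then show ?case using G_mono[of x n] by simp
qed

end


context ppn begin

lemma u_eq: "(\<Sum>\<^sub>\<infinity>z. taboo Q x n z / exit_rate Q z) = (\<Sum>z\<in>B x n. taboo Q x n z / (r1 z + r2 z))"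
proof -
  have "(\<Sum>\<^sub>\<infinity>z. taboo Q x n z / exit_rate Q z) = (\<Sum>z\<in>UNIV \<inter> B x n. taboo Q x n z / exit_rate Q z)"
    by (rule infsum_fin) (auto simp: B_fin taboo_supp)
  then show ?thesis by (simp add: exit_eq)
qed

lemma S_le: "S x n \<le> (2 * (l1 + l2)) * (\<Sum>\<^sub>\<infinity>z. taboo Q x n z / exit_rate Q z)"
proof -
  have "S x n \<le> (\<Sum>z\<in>B x n. (2 * (l1 + l2)) * (taboo Q x n z / (r1 z + r2 z)))"
    unfolding S_def
  proof (rule sum_mono)
    fix z
    have rp: "r1 z + r2 z > 0" using r1_pos[of z] r2_pos[of z] by simp
    have rl: "r1 z + r2 z \<le> 2 * (l1 + l2)" using l1 l2 by (auto simp: r1_def r2_def)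
    have "taboo Q x n z = (r1 z + r2 z) * (taboo Q x n z / (r1 z + r2 z))" using rp by simp
    also have "\<dots> \<le> (2 * (l1 + l2)) * (taboo Q x n z / (r1 z + r2 z))"
      using rl rp taboo_nonneg[of x n z] by (intro mult_right_mono) auto
    finally show "taboo Q x n z \<le> (2 * (l1 + l2)) * (taboo Q x n z / (r1 z + r2 z))" .
  qed
  also have "\<dots> = (2 * (l1 + l2)) * (\<Sum>\<^sub>\<infinity>z. taboo Q x n z / exit_rate Q z)"
    by (simp add: u_eq sum_distrib_left)
  finally show ?thesis .
qed

lemma not_summable: "\<not> summable (\<lambda>n. \<Sum>\<^sub>\<infinity>z. taboo Q x n z / exit_rate Q z)"
proof
  assume su: "summable (\<lambda>n. \<Sum>\<^sub>\<infinity>z. taboo Q x n z / exit_rate Q z)"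
  have sS: "summable (S x)"
  proof (rule summable_comparison_test')
    show "summable (\<lambda>n. (2 * (l1 + l2)) * (\<Sum>\<^sub>\<infinity>z. taboo Q x n z / exit_rate Q z))"
      using su by (rule summable_mult)
    fix n :: nat
    show "norm (S x n) \<le> (2 * (l1 + l2)) * (\<Sum>\<^sub>\<infinity>z. taboo Q x n z / exit_rate Q z)"
      using S_le S_nonneg by simp
  qed
  have lim: "S x \<longlonglongrightarrow> 0" using sS by (rule summable_LIMSEQ_zero)
  define M where "M = suminf (S x) / (m * m)"
  have FM: "F x n \<le> M" for n
  proof -
    have "(\<Sum>k<n. S x k) \<le> suminf (S x)"
      using sS by (rule sum_le_suminf) (auto simp: S_nonneg)
    then have "(\<Sum>k<n. S x k) / (m * m) \<le> M" unfolding M_def using m_pos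
      by (intro divide_right_mono) auto
    then show ?thesis using F_bound[of x n] by linarith
  qed
  have M0: "M \<ge> 0" using FM[of 0] F_nonneg[of x 0] by linarith
  define g1 where "g1 = G x 1"
  have g1p: "g1 > 0" using G_1 by (simp add: g1_def)
  define eps where "eps = g1^2 / (M + 1)"
  have epsp: "eps > 0" using g1p M0 by (simp add: eps_def)
  have "\<forall>\<^sub>F n in sequentially. S x n < eps" using order_tendstoD(2)[OF lim epsp] .
  then obtain N where N: "\<And>n. n \<ge> N \<Longrightarrow> S x n < eps" by (auto simp: eventually_sequentially)
  define n where "n = max N 1"
  have Sn: "S x n < eps" using N by (simp add: n_def)
  have "g1^2 \<le> (G x n)^2"
    using G_ge[of n x] g1p by (intro power_mono) (auto simp: n_def g1_def)
  also have "\<dots> \<le> S x n * F x n"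
    unfolding G_def S_def F_def by (rule CS) (auto simp: B_fin taboo_nonneg)
  also have "\<dots> \<le> eps * M"
    using Sn FM[of n] S_nonneg[of x n] F_nonneg[of x n] M0 by (intro mult_mono) auto
  also have "\<dots> < g1^2"
  proof -
    have "eps * M = g1^2 * (M / (M + 1))" by (simp add: eps_def)
    also have "\<dots> < g1^2 * 1" using g1p M0 by (intro mult_strict_left_mono) auto
    finally show ?thesis by simp
  qed
  finally show False by simp
qed

end

theorem theorem1:
  fixes l1 l2 m1 m2 :: real
  assumes "l1 > 0" and "l2 > 0" and "m1 > 0" and "m2 > 0"
    and "l1 = m1" and "l2 = m2"
  shows "\<not> stabilizable l1 l2 m1 m2"
proof
  assume "stabilizable l1 l2 m1 m2"
  then obtain P C where P: "non_idling P" and C: "positive_recurrent_class (pp_rate l1 l2 l1 l2 P) C"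
    using assms(5,6) unfolding stabilizable_def stable_process_def by auto
  interpret ppn l1 l2 P using assms(1,2) P by unfold_locales
  from C obtain x where Cx: "C = {y. accessible Q x y \<and> accessible Q y x}"
    and pr: "\<forall>y\<in>C. positive_recurrent_state Q y"
    unfolding positive_recurrent_class_def by auto
  have "x \<in> C" unfolding Cx accessible_def by simp
  then have "positive_recurrent_state Q x" using pr by blast
  then show False using not_summable[of x] unfolding positive_recurrent_state_def by blast
qed

end
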